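(* Let $A$ be a nonempty set of positive integers, let $s\in A$ and let $n$ be a positive integer. Then $$N^p_A(n)-N^p_A(n-s)=p_A(n-s)+N^p_{A\setminus\{s\}}(n).$$
   Context: For a set $B$ of positive integers, $N^p_B(m)$ is the total number of parts, summed over all partitions of $m$ with parts in $B$, and $p_B(m)$ is the number of partitions of $m$ with parts in $B$. Conventions: $p_B(0)=1$, $N^p_B(0)=0$, and $p_B(m)=N^p_B(m)=0$ for $m<0$; $N^p_{\emptyset}\equiv 0$. *)

theory Defs
  imports Main "HOL-Library.Multiset"
begin

definition partitions_in :: "nat set \<Rightarrow> nat \<Rightarrow> nat multiset set" where
  "partitions_in B m = {M. set_mset M \<subseteq> B \<and> (\<forall>x\<in>#M. 0 < x) \<and> sum_mset M = m}"

definition p_part :: "nat set \<Rightarrow> int \<Rightarrow> int" where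
  "p_part B m = (if m < 0 then 0 else int (card (partitions_in B (nat m))))"

definition Np_part :: "nat set \<Rightarrow> int \<Rightarrow> int" where
  "Np_part B m = (if m < 0 then 0 else int (\<Sum>M\<in>partitions_in B (nat m). size M))"

end

theory Submission
  imports Defs
begin

lemma size_le_sum: "(\<forall>x\<in>#M. 0 < (x::nat)) \<Longrightarrow> size M \<le> sum_mset M"
  by (induction M) auto

lemma finite_partitions: "finite (partitions_in B m)"
proof (rule finite_subset)
  show "partitions_in B m \<subseteq> (\<Union>k\<le>m. multisets_of_size {0..m} k)"
  proof
    fix M assume "M \<in> partitions_in B m"
    hence h: "\<forall>x\<in>#M. 0 < x" "sum_mset M = m" by (auto simp: partitions_in_def)
    have "size M \<le> m" using size_le_sum[OF h(1)] h(2) by simp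
    moreover have "set_mset M \<subseteq> {0..m}" using h(2)
      by (auto dest!: multi_member_split)
    ultimately show "M \<in> (\<Union>k\<le>m. multisets_of_size {0..m} k)"
      by (auto simp: multisets_of_size_def)
  qed
qed auto

theorem theorem5:
  fixes A :: "nat set" and s n :: nat
  assumes "A \<noteq> {}" and "\<forall>a\<in>A. 0 < a" and "s \<in> A" and "0 < n"
  shows "Np_part A (int n) - Np_part A (int n - int s)
           = p_part A (int n - int s) + Np_part (A - {s}) (int n)"
proof -
  have s0: "0 < s" using assms by auto
  let ?P = "partitions_in A n"
  define S1 where "S1 = {M\<in>?P. s \<in># M}"
  have S2: "{M\<in>?P. s \<notin># M} = partitions_in (A - {s}) n"
    by (auto simp: partitions_in_def)
  have split: "(\<Sum>M\<in>?P. size M) = (\<Sum>M\<in>S1. size M) + (\<Sum>M\<in>partitions_in (A - {s}) n. size M)"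
    unfolding S1_def S2[symmetric]
  proof -
    have f: "finite ?P" by (rule finite_partitions)
    have u: "?P = {M\<in>?P. s \<in># M} \<union> {M\<in>?P. s \<notin># M}" by auto
    show "(\<Sum>M\<in>?P. size M) = (\<Sum>M\<in>{M\<in>?P. s \<in># M}. size M) + (\<Sum>M\<in>{M\<in>?P. s \<notin># M}. size M)"
      by (subst u, rule sum.union_disjoint) (use f in auto)
  qed
  show ?thesis
  proof (cases "s \<le> n")
    case False
    have "S1 = {}" using False
      by (auto simp: S1_def partitions_in_def dest!: multi_member_split)
    thus ?thesis using False split by (simp add: Np_part_def p_part_def)
  next
    case True
    let ?Q = "partitions_in A (n - s)"
    have img: "S1 = (\<lambda>M. M + {#s#}) ` ?Q"
    proof
      show "S1 \<subseteq> (\<lambda>M. M + {#s#}) ` ?Q"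
      proof
        fix M assume "M \<in> S1"
        then obtain M' where "M = add_mset s M'" and "M \<in> ?P"
          by (auto simp: S1_def dest!: multi_member_split)
        thus "M \<in> (\<lambda>M. M + {#s#}) ` ?Q"
          by (auto simp: partitions_in_def intro!: image_eqI[where x=M'])
      qed
      show "(\<lambda>M. M + {#s#}) ` ?Q \<subseteq> S1"
        using True s0 assms(3) by (auto simp: S1_def partitions_in_def)
    qed
    have "(\<Sum>M\<in>S1. size M) = (\<Sum>M\<in>?Q. size M + 1)"
      unfolding img by (subst sum.reindex) (auto simp: inj_on_def)
    also have "\<dots> = (\<Sum>M\<in>?Q. size M) + card ?Q"
      by (simp only: sum.distrib[of size "\<lambda>_. 1::nat" ?Q] card_eq_sum)
    finally have e: "(\<Sum>M\<in>S1. size M) = (\<Sum>M\<in>?Q. size M) + card ?Q" .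
    have n: "nat (int n - int s) = n - s" using True by simp
    show ?thesis using True split e by (simp add: Np_part_def p_part_def n)
  qed
qed

end
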